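(* For each integer $n>2$, there is a finite group $Q_n$ with the following properties: (1) $Q_n$ is generated by two elements $A,B$; (2) $Q_n$ is metabelian; (3) $Q_n$ is $n$-periodic, i.e. $g^n=1$ for all $g\in Q_n$; (4) the generator $A$ and the commutator $[A,B]$ both have order exactly $n$. *)

theory Defs
  imports "HOL-Algebra.Algebra"
begin

definition commutator :: "('a, 'b) monoid_scheme \<Rightarrow> 'a \<Rightarrow> 'a \<Rightarrow> 'a" where
  "commutator G a b = inv\<^bsub>G\<^esub> a \<otimes>\<^bsub>G\<^esub> inv\<^bsub>G\<^esub> b \<otimes>\<^bsub>G\<^esub> a \<otimes>\<^bsub>G\<^esub> b"

definition metabelian :: "('a, 'b) monoid_scheme \<Rightarrow> bool" where
  "metabelian G \<longleftrightarrow> (\<forall>x \<in> derived G (carrier G). \<forall>y \<in> derived G (carrier G).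
       x \<otimes>\<^bsub>G\<^esub> y = y \<otimes>\<^bsub>G\<^esub> x)"

end

theory Submission
  imports Defs "HOL-Library.Countable"
begin

definition G0 :: "nat \<Rightarrow> nat \<Rightarrow> (nat \<times> (nat \<Rightarrow> int)) monoid" where
 "G0 n L = \<lparr>carrier = {..<n} \<times> (PiE {..<L} (\<lambda>_. {0..<int n})),
   monoid.mult = (\<lambda>x y. ((fst x + fst y) mod n,
            \<lambda>i\<in>{..<L}. (snd x i + snd y ((i + fst x) mod L)) mod int n)),
   one = (0, \<lambda>i\<in>{..<L}. 0)\<rparr>"

locale wr =
  fixes n L :: nat
  assumes Ldvd: "L dvd n" and Lgt: "2 < L" and npos: "0 < n"
begin

abbreviation "G \<equiv> G0 n L"

lemma modL: "(x mod n) mod L = x mod L"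
  by (simp add: Ldvd mod_mod_cancel)

lemma carrier_G: "carrier G = {..<n} \<times> (PiE {..<L} (\<lambda>_. {0..<int n}))"
  by (simp add: G0_def)

lemma mult_G: "x \<otimes>\<^bsub>G\<^esub> y = ((fst x + fst y) mod n,
            \<lambda>i\<in>{..<L}. (snd x i + snd y ((i + fst x) mod L)) mod int n)"
  by (simp add: G0_def)

lemma one_G: "\<one>\<^bsub>G\<^esub> = (0, \<lambda>i\<in>{..<L}. 0)"
  by (simp add: G0_def)

lemma Lpos: "0 < L" using Lgt by simp

lemma mem_carrier: "x \<in> carrier G \<longleftrightarrow> fst x < n \<and> snd x \<in> PiE {..<L} (\<lambda>_. {0..<int n})"
  by (cases x) (simp add: carrier_G)

lemma restrict_mod_in: "(\<lambda>i\<in>{..<L}. F i mod int n) \<in> PiE {..<L} (\<lambda>_. {0..<int n})"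
  using npos by (auto simp: PiE_iff)

lemma group_G: "group G"
proof (rule groupI)
  fix x y assume "x \<in> carrier G" "y \<in> carrier G"
  then show "x \<otimes>\<^bsub>G\<^esub> y \<in> carrier G"
    using npos by (simp add: mem_carrier mult_G restrict_mod_in)
next
  show "\<one>\<^bsub>G\<^esub> \<in> carrier G" using npos by (auto simp: mem_carrier one_G PiE_iff)
next
  fix x y z assume x: "x \<in> carrier G" and y: "y \<in> carrier G" and z: "z \<in> carrier G"
  obtain s f where xs: "x = (s,f)" by (cases x)
  obtain t g where ys: "y = (t,g)" by (cases y)
  obtain u h where zs: "z = (u,h)" by (cases z)
  have "((i + (s + t) mod n) mod L) = (((i + s) mod L + t) mod L)" for i
    by (metis add.assoc mod_add_left_eq mod_add_right_eq modL)
  then show "x \<otimes>\<^bsub>G\<^esub> y \<otimes>\<^bsub>G\<^esub> z = x \<otimes>\<^bsub>G\<^esub> (y \<otimes>\<^bsub>G\<^esub> z)"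
    using Lpos by (auto simp: xs ys zs mult_G fun_eq_iff mod_simps add.assoc)
next
  fix x assume x: "x \<in> carrier G"
  obtain s f where xs: "x = (s,f)" by (cases x)
  show "\<one>\<^bsub>G\<^esub> \<otimes>\<^bsub>G\<^esub> x = x"
    using x by (auto simp: xs mult_G one_G mem_carrier fun_eq_iff PiE_iff intro: extensional_arb[symmetric])
next
  fix x assume x: "x \<in> carrier G"
  obtain t f where xs: "x = (t,f)" by (cases x)
  let ?y = "((n - t) mod n, \<lambda>i\<in>{..<L}. (- f ((i + (n - t) mod n) mod L)) mod int n)"
  have "?y \<in> carrier G" using npos by (simp add: mem_carrier restrict_mod_in)
  moreover have "?y \<otimes>\<^bsub>G\<^esub> x = \<one>\<^bsub>G\<^esub>"
    using x npos by (auto simp: xs mult_G one_G mem_carrier fun_eq_iff mod_simps)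
  ultimately show "\<exists>y\<in>carrier G. y \<otimes>\<^bsub>G\<^esub> x = \<one>\<^bsub>G\<^esub>" by blast
qed

lemma inv_G: assumes x: "x \<in> carrier G"
  shows "inv\<^bsub>G\<^esub> x = ((n - fst x) mod n, \<lambda>i\<in>{..<L}. (- snd x ((i + (n - fst x) mod n) mod L)) mod int n)"
proof -
  obtain t f where xs: "x = (t,f)" by (cases x)
  let ?y = "((n - t) mod n, \<lambda>i\<in>{..<L}. (- f ((i + (n - t) mod n) mod L)) mod int n)"
  have "?y \<in> carrier G" using npos by (simp add: mem_carrier restrict_mod_in)
  moreover have "?y \<otimes>\<^bsub>G\<^esub> x = \<one>\<^bsub>G\<^esub>"
    using x npos by (auto simp: xs mult_G one_G mem_carrier fun_eq_iff mod_simps)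
  ultimately show ?thesis using group.inv_equality[OF group_G] x xs by auto
qed

lemma pow_G: assumes x: "x \<in> carrier G"
  shows "x [^]\<^bsub>G\<^esub> (k::nat) = ((k * fst x) mod n,
     \<lambda>i\<in>{..<L}. (\<Sum>j<k. snd x ((i + j * fst x) mod L)) mod int n)"
proof (induction k)
  case 0
  then show ?case by (simp add: one_G fun_eq_iff)
next
  case (Suc k)
  have e: "(i + k * fst x mod n) mod L = (i + k * fst x) mod L" for i
    by (metis mod_add_right_eq modL)
  show ?case
    using Suc by (auto simp: mult_G fun_eq_iff mod_simps e add.commute)
qed

lemma dvd_sum_mod: "int n dvd (\<Sum>j\<in>A. F j mod int n) \<longleftrightarrow> int n dvd (\<Sum>j\<in>A. F j)"
  by (simp add: dvd_eq_mod_eq_0 mod_sum_eq)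

definition Pinv :: "nat \<times> (nat \<Rightarrow> int) \<Rightarrow> bool" where
  "Pinv x \<longleftrightarrow> x \<in> carrier G \<and> (\<forall>s i. int n dvd (\<Sum>j<n. snd x ((i + j * s) mod L)))"

lemma Pinv_mult: assumes "Pinv x" "Pinv y" shows "Pinv (x \<otimes>\<^bsub>G\<^esub> y)"
proof -
  obtain s f where xs: "x = (s,f)" by (cases x)
  obtain t g where ys: "y = (t,g)" by (cases y)
  have xc: "x \<in> carrier G" and yc: "y \<in> carrier G" using assms by (auto simp: Pinv_def)
  have "int n dvd (\<Sum>j<n. snd (x \<otimes>\<^bsub>G\<^esub> y) ((i + j * u) mod L))" for u i
  proof -
    have "(\<Sum>j<n. snd (x \<otimes>\<^bsub>G\<^esub> y) ((i + j * u) mod L))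
       = (\<Sum>j<n. (f ((i + j * u) mod L) + g ((i + s + j * u) mod L)) mod int n)"
      using Lpos by (intro sum.cong) (auto simp: xs ys mult_G mod_simps ac_simps)
    moreover have "int n dvd (\<Sum>j<n. f ((i + j * u) mod L) + g ((i + s + j * u) mod L))"
      using assms unfolding Pinv_def xs ys sum.distrib by (auto intro!: dvd_add)
    ultimately show ?thesis by (simp add: dvd_sum_mod)
  qed
  then show ?thesis using assms group.subgroupE(4)[OF group_G] xc yc
    by (simp add: Pinv_def monoid.m_closed[OF group.is_monoid[OF group_G]])
qed

lemma Pinv_inv: assumes "Pinv x" shows "Pinv (inv\<^bsub>G\<^esub> x)"
proof -
  obtain s f where xs: "x = (s,f)" by (cases x)
  have xc: "x \<in> carrier G" using assms by (auto simp: Pinv_def)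
  have "int n dvd (\<Sum>j<n. snd (inv\<^bsub>G\<^esub> x) ((i + j * u) mod L))" for u i
  proof -
    have "(\<Sum>j<n. snd (inv\<^bsub>G\<^esub> x) ((i + j * u) mod L))
       = (\<Sum>j<n. (- f ((i + (n - s) mod n + j * u) mod L)) mod int n)"
      using Lpos by (intro sum.cong) (auto simp: xs inv_G[OF xc[unfolded xs]] mod_simps ac_simps)
    moreover have "int n dvd (\<Sum>j<n. - f ((i + (n - s) mod n + j * u) mod L))"
      using assms unfolding Pinv_def xs sum_negf by auto
    ultimately show ?thesis by (simp add: dvd_sum_mod)
  qed
  then show ?thesis using xc
    by (simp add: Pinv_def group.inv_closed[OF group_G])
qed

lemma G_monoid: "monoid G" using group.is_monoid[OF group_G] .

lemma fst_mult: "fst (x \<otimes>\<^bsub>G\<^esub> y) = (fst x + fst y) mod n" by (simp add: mult_G)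

lemma fst_inv: "x \<in> carrier G \<Longrightarrow> fst (inv\<^bsub>G\<^esub> x) = (n - fst x) mod n" by (simp add: inv_G)

end

lemma periodic_sum:
  fixes F :: "nat \<Rightarrow> int"
  assumes "0 < L"
  shows "(\<Sum>j<k * L. F (j mod L)) = int k * (\<Sum>j<L. F j)"
proof (induction k)
  case 0
  then show ?case by simp
next
  case (Suc k)
  have "(\<Sum>j\<in>{k*L..<L + k*L}. F (j mod L)) = (\<Sum>j\<in>{0..<L}. F ((j + k*L) mod L))"
    using sum.shift_bounds_nat_ivl[of "\<lambda>j. F (j mod L)" 0 "k*L" L] by simp
  also have "\<dots> = (\<Sum>j<L. F j)" by (intro sum.cong) auto
  finally have 1: "(\<Sum>j\<in>{k*L..<L + k*L}. F (j mod L)) = (\<Sum>j<L. F j)" .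
  have 2: "(\<Sum>j<L + k*L. F (j mod L)) = (\<Sum>j<k*L. F (j mod L)) + (\<Sum>j\<in>{k*L..<L + k*L}. F (j mod L))"
    using sum.atLeastLessThan_concat[of 0 "k*L" "L + k*L" "\<lambda>j. F (j mod L)"]
    by (simp add: lessThan_atLeast0)
  have 3: "Suc k * L = L + k * L" by simp
  show ?case unfolding 3 2 1 Suc by (simp add: algebra_simps)
qed

lemma fst_arith: assumes "s < (n::nat)" "t < n"
  shows "((((s+t) mod n + (n-s) mod n) mod n) + (n-t) mod n) mod n = 0"
proof -
  have "((((s+t) mod n + (n-s) mod n) mod n) + (n-t) mod n) mod n = (s+t+(n-s)+(n-t)) mod n"
    by (simp add: mod_simps)
  also have "s+t+(n-s)+(n-t) = n*2" using assms by simp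
  finally show ?thesis by simp
qed

definition dd :: "nat \<Rightarrow> int" where
  "dd k = (if k = 0 then 1 else if k = 2 then -1 else 0)"

locale wr2 = wr +
  assumes hypD: "\<And>i s. int L dvd (\<Sum>j<L. dd ((i + j * s) mod L))"
begin

definition "eA = (1::nat, \<lambda>i\<in>{..<L}. (0::int))"
definition "eB = (0::nat, \<lambda>i\<in>{..<L}. dd i mod int n)"

lemma n_ge: "3 \<le> n" using dvd_imp_le[OF Ldvd npos] Lgt by linarith

lemma eA_carrier: "eA \<in> carrier G" using n_ge by (auto simp: eA_def mem_carrier PiE_iff)
lemma eB_carrier: "eB \<in> carrier G" using npos by (simp add: eB_def mem_carrier restrict_mod_in)

lemma Pinv_one: "Pinv \<one>\<^bsub>G\<^esub>"
  unfolding Pinv_def using monoid.one_closed[OF G_monoid] Lpos by (simp add: one_G)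

lemma Pinv_eA: "Pinv eA"
  unfolding Pinv_def using eA_carrier Lpos by (simp add: eA_def)

lemma Pinv_eB: "Pinv eB"
proof -
  have "int n dvd (\<Sum>j<n. snd eB ((i + j * s) mod L))" for s i
  proof -
    have nL: "n = (n div L) * L" using Ldvd by simp
    have "(\<Sum>j<n. snd eB ((i + j * s) mod L)) = (\<Sum>j<n. dd ((i + j * s) mod L) mod int n)"
      using Lpos by (intro sum.cong) (auto simp: eB_def)
    moreover have "(\<Sum>j<n. dd ((i + j * s) mod L)) = (\<Sum>j<(n div L) * L. dd ((i + (j mod L) * s) mod L))"
      using nL[symmetric] by (intro sum.cong) (auto, metis mod_add_right_eq mod_mult_left_eq)
    moreover have "\<dots> = int (n div L) * (\<Sum>j<L. dd ((i + j * s) mod L))"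
      using periodic_sum[OF Lpos, of "\<lambda>j. dd ((i + j * s) mod L)"] by simp
    moreover have "int n dvd int (n div L) * (\<Sum>j<L. dd ((i + j * s) mod L))"
    proof -
      obtain c where "(\<Sum>j<L. dd ((i + j * s) mod L)) = int L * c" using hypD by (meson dvdE)
      then show ?thesis using nL by (metis dvd_triv_left mult.assoc mult.commute of_nat_mult)
    qed
    ultimately show ?thesis by (simp add: dvd_sum_mod)
  qed
  then show ?thesis using eB_carrier by (simp add: Pinv_def)
qed

abbreviation "C \<equiv> generate G {eA, eB}"

lemma C_Pinv: "x \<in> C \<Longrightarrow> Pinv x"
proof (induction rule: generate.induct)
  case one then show ?case by (rule Pinv_one)
next
  case (incl h) then show ?case using Pinv_eA Pinv_eB by auto
next
  case (inv h) then show ?case using Pinv_eA Pinv_eB Pinv_inv by blast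
next
  case (eng h1 h2) then show ?case using Pinv_mult by auto
qed

lemma C_sub: "C \<subseteq> carrier G"
  using C_Pinv Pinv_def by auto

lemma C_subgroup: "subgroup C G"
  using group.generate_is_subgroup[OF group_G] eA_carrier eB_carrier by auto

lemma C_exp: "x \<in> C \<Longrightarrow> x [^]\<^bsub>G\<^esub> n = \<one>\<^bsub>G\<^esub>"
proof -
  assume "x \<in> C"
  then have P: "Pinv x" by (rule C_Pinv)
  then have xc: "x \<in> carrier G" by (simp add: Pinv_def)
  have "(\<lambda>i\<in>{..<L}. (\<Sum>j<n. snd x ((i + j * fst x) mod L)) mod int n) = (\<lambda>i\<in>{..<L}. 0)"
    using P unfolding Pinv_def by (auto simp: fun_eq_iff)
  then show ?thesis by (simp add: pow_G[OF xc] one_G)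
qed

lemma derived_fst: "x \<in> derived G C \<Longrightarrow> x \<in> carrier G \<and> fst x = 0"
  unfolding derived_def
proof (induction rule: generate.induct)
  case one then show ?case using npos by (auto simp: one_G mem_carrier PiE_iff)
next
  case (incl h)
  then obtain a b where ab: "a \<in> C" "b \<in> C" "h = a \<otimes>\<^bsub>G\<^esub> b \<otimes>\<^bsub>G\<^esub> inv\<^bsub>G\<^esub> a \<otimes>\<^bsub>G\<^esub> inv\<^bsub>G\<^esub> b" by blast
  then have ac: "a \<in> carrier G" and bc: "b \<in> carrier G" using C_sub by auto
  have "fst a < n" "fst b < n" using ac bc by (auto simp: mem_carrier)
  then have "((((fst a + fst b) mod n + (n - fst a) mod n) mod n) + (n - fst b) mod n) mod n = 0"
    by (rule fst_arith)
  then show ?case using ab ac bc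
    by (simp add: fst_mult fst_inv group.inv_closed[OF group_G] monoid.m_closed[OF G_monoid])
next
  case (inv h)
  then obtain a b where ab: "a \<in> C" "b \<in> C" "h = a \<otimes>\<^bsub>G\<^esub> b \<otimes>\<^bsub>G\<^esub> inv\<^bsub>G\<^esub> a \<otimes>\<^bsub>G\<^esub> inv\<^bsub>G\<^esub> b" by blast
  then have ac: "a \<in> carrier G" and bc: "b \<in> carrier G" using C_sub by auto
  have hc: "h \<in> carrier G" using ab ac bc
    by (simp add: group.inv_closed[OF group_G] monoid.m_closed[OF G_monoid])
  have "fst a < n" "fst b < n" using ac bc by (auto simp: mem_carrier)
  then have "((((fst a + fst b) mod n + (n - fst a) mod n) mod n) + (n - fst b) mod n) mod n = 0"
    by (rule fst_arith)
  then have "fst h = 0" using ab ac bc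
    by (simp add: fst_mult fst_inv group.inv_closed[OF group_G] monoid.m_closed[OF G_monoid])
  then show ?case using hc by (simp add: fst_inv group.inv_closed[OF group_G])
next
  case (eng h1 h2)
  then show ?case by (simp add: fst_mult monoid.m_closed[OF G_monoid])
qed

end


context wr2 begin

lemma fst0_comm: assumes "x \<in> carrier G" "y \<in> carrier G" "fst x = 0" "fst y = 0"
  shows "x \<otimes>\<^bsub>G\<^esub> y = y \<otimes>\<^bsub>G\<^esub> x"
  using assms Lpos by (auto simp: mult_G fun_eq_iff ac_simps)

lemma ord_eA: "group.ord G eA = n"
proof -
  have "eA [^]\<^bsub>G\<^esub> k = \<one>\<^bsub>G\<^esub> \<longleftrightarrow> n dvd k" for k
    using eA_carrier by (auto simp: pow_G eA_def one_G fun_eq_iff mod_eq_0_iff_dvd)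
  then show ?thesis using group.ord_unique[OF group_G eA_carrier] by blast
qed

definition "cAB = commutator G eA eB"

lemma cAB_carrier: "cAB \<in> carrier G"
  unfolding cAB_def commutator_def using eA_carrier eB_carrier
  by (simp add: group.inv_closed[OF group_G] monoid.m_closed[OF G_monoid])

lemma nL0: "n mod L = 0" using Ldvd by simp

lemma snd_mult_at: "i < L \<Longrightarrow> snd (x \<otimes>\<^bsub>G\<^esub> y) i = (snd x i + snd y ((i + fst x) mod L)) mod int n"
  by (simp add: mult_G)

lemma cAB_vals: "fst cAB = 0 \<and> snd cAB 1 = (-1) mod int n"
proof -
  have n1: "(n - 1) mod n = n - 1" "(1 + (n - 1)) = n" "Suc (n - 1) = n" using n_ge by auto
  have L1: "1 < L" "0 < L" using Lgt by auto
  let ?iA = "inv\<^bsub>G\<^esub> eA" and ?iB = "inv\<^bsub>G\<^esub> eB"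
  have iAc: "?iA \<in> carrier G" and iBc: "?iB \<in> carrier G"
    using eA_carrier eB_carrier by (auto simp: group.inv_closed[OF group_G])
  have fiA: "fst ?iA = n - 1" using n1 unfolding inv_G[OF eA_carrier] by (simp add: eA_def)
  have siA: "snd ?iA 1 = 0" using L1 unfolding inv_G[OF eA_carrier] by (simp add: eA_def)
  have fiB: "fst ?iB = 0" unfolding inv_G[OF eB_carrier] by (simp add: eB_def)
  have siB: "snd ?iB 0 = (-1) mod int n" using L1 n_ge
    unfolding inv_G[OF eB_carrier] by (simp add: eB_def dd_def mod_simps)
  let ?P1 = "?iA \<otimes>\<^bsub>G\<^esub> ?iB"
  have fP1: "fst ?P1 = n - 1" using fiA fiB n1 by (simp add: fst_mult)
  have sP1: "snd ?P1 1 = (-1) mod int n" using siA siB fiA n1 nL0 L1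
    by (simp add: snd_mult_at)
  let ?P2 = "?P1 \<otimes>\<^bsub>G\<^esub> eA"
  have fP2: "fst ?P2 = 0" using fP1 n1 by (simp add: fst_mult eA_def)
  have sP2: "snd ?P2 1 = (-1) mod int n" using sP1 L1
    by (simp add: snd_mult_at eA_def)
  let ?P3 = "?P2 \<otimes>\<^bsub>G\<^esub> eB"
  have fP3: "fst ?P3 = 0" using fP2 by (simp add: fst_mult eB_def)
  have sP3: "snd ?P3 1 = (-1) mod int n" using sP2 fP2 L1
    by (simp add: snd_mult_at eB_def dd_def)
  show ?thesis using fP3 sP3 unfolding cAB_def commutator_def by simp
qed

lemma ord_cAB: "group.ord G cAB = n"
proof -
  obtain h where ch: "cAB = (0, h)" using cAB_vals by (cases cAB) auto
  have hc: "h \<in> PiE {..<L} (\<lambda>_. {0..<int n})" using cAB_carrier ch by (simp add: mem_carrier)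
  have h1: "h 1 = (-1) mod int n" using cAB_vals ch by simp
  have "cAB [^]\<^bsub>G\<^esub> k = \<one>\<^bsub>G\<^esub> \<longleftrightarrow> n dvd k" for k
  proof
    assume "cAB [^]\<^bsub>G\<^esub> k = \<one>\<^bsub>G\<^esub>"
    then have eqf: "(\<lambda>i\<in>{..<L}. (\<Sum>j<k. h ((i + j * 0) mod L)) mod int n) = (\<lambda>i\<in>{..<L}. 0)"
      using cAB_carrier by (simp add: pow_G ch one_G)
    have "(\<Sum>j<k. h ((1 + j * 0) mod L)) mod int n = 0"
      using fun_cong[OF eqf, of 1] Lgt by simp
    then have "(int k * ((-1) mod int n)) mod int n = 0" using Lgt h1 by simp
    then have "(- int k) mod int n = 0" by (simp add: mod_mult_right_eq)
    then have "int n dvd int k" by (simp add: mod_eq_0_iff_dvd)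
    then show "n dvd k" by simp
  next
    assume "n dvd k"
    then obtain m where km: "k = n * m" by blast
    have "(\<lambda>i\<in>{..<L}. (\<Sum>j<k. h ((i + j * 0) mod L)) mod int n) = (\<lambda>i\<in>{..<L}. 0)"
      by (auto simp: fun_eq_iff km)
    then show "cAB [^]\<^bsub>G\<^esub> k = \<one>\<^bsub>G\<^esub>"
      using cAB_carrier by (simp add: pow_G ch one_G)
  qed
  then show ?thesis using group.ord_unique[OF group_G cAB_carrier] by blast
qed

end


definition good :: "'a monoid \<Rightarrow> 'a \<Rightarrow> 'a \<Rightarrow> nat \<Rightarrow> bool" where
  "good Q A B n \<longleftrightarrow> group Q \<and> finite (carrier Q) \<and>
           A \<in> carrier Q \<and> B \<in> carrier Q \<and>
           generate Q {A, B} = carrier Q \<and>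
           metabelian Q \<and>
           (\<forall>g \<in> carrier Q. g [^]\<^bsub>Q\<^esub> n = \<one>\<^bsub>Q\<^esub>) \<and>
           group.ord Q A = n \<and>
           group.ord Q (commutator Q A B) = n"

definition img :: "'a monoid \<Rightarrow> ('a \<Rightarrow> 'b) \<Rightarrow> 'b monoid" where
  "img G h = \<lparr>carrier = h ` carrier G,
     monoid.mult = (\<lambda>x y. h (inv_into (carrier G) h x \<otimes>\<^bsub>G\<^esub> inv_into (carrier G) h y)),
     one = h \<one>\<^bsub>G\<^esub>\<rparr>"

lemma img_group:
  assumes G: "group G" and inj: "inj_on h (carrier G)"
  shows "group (img G h) \<and> h \<in> iso G (img G h)"
proof -
  have m: "h a \<otimes>\<^bsub>img G h\<^esub> h b = h (a \<otimes>\<^bsub>G\<^esub> b)" if "a \<in> carrier G" "b \<in> carrier G" for a b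
    using that inj by (simp add: img_def inv_into_f_f)
  have c: "carrier (img G h) = h ` carrier G" by (simp add: img_def)
  have o: "\<one>\<^bsub>img G h\<^esub> = h \<one>\<^bsub>G\<^esub>" by (simp add: img_def)
  have gr: "group (img G h)"
  proof (rule groupI)
    fix x y assume "x \<in> carrier (img G h)" "y \<in> carrier (img G h)"
    then show "x \<otimes>\<^bsub>img G h\<^esub> y \<in> carrier (img G h)"
      using m c G by (auto simp: group.is_monoid monoid.m_closed)
  next
    show "\<one>\<^bsub>img G h\<^esub> \<in> carrier (img G h)" using c o G by (simp add: group.is_monoid monoid.one_closed)
  next
    fix x y z assume "x \<in> carrier (img G h)" "y \<in> carrier (img G h)" "z \<in> carrier (img G h)"
    then show "x \<otimes>\<^bsub>img G h\<^esub> y \<otimes>\<^bsub>img G h\<^esub> z = x \<otimes>\<^bsub>img G h\<^esub> (y \<otimes>\<^bsub>img G h\<^esub> z)"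
      using m c G by (auto simp: group.is_monoid monoid.m_closed monoid.m_assoc)
  next
    fix x assume "x \<in> carrier (img G h)"
    then show "\<one>\<^bsub>img G h\<^esub> \<otimes>\<^bsub>img G h\<^esub> x = x"
      using m c o G by (auto simp: group.is_monoid monoid.one_closed)
  next
    fix x assume "x \<in> carrier (img G h)"
    then obtain a where a: "a \<in> carrier G" "x = h a" using c by auto
    then have "h (inv\<^bsub>G\<^esub> a) \<in> carrier (img G h) \<and> h (inv\<^bsub>G\<^esub> a) \<otimes>\<^bsub>img G h\<^esub> x = \<one>\<^bsub>img G h\<^esub>"
      using m c o G by (simp add: group.inv_closed group.l_inv)
    then show "\<exists>y\<in>carrier (img G h). y \<otimes>\<^bsub>img G h\<^esub> x = \<one>\<^bsub>img G h\<^esub>" by blast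
  qed
  have "h \<in> iso G (img G h)"
    unfolding iso_def hom_def bij_betw_def using m c inj by auto
  then show ?thesis using gr by simp
qed

lemma good_transport:
  fixes Q :: "'a monoid" and h :: "'a \<Rightarrow> 'b"
  assumes g: "good Q A B n" and inj: "inj_on h (carrier Q)"
  shows "good (img Q h) (h A) (h B) n"
proof -
  have G: "group Q" using g by (simp add: good_def)
  have H: "group (img Q h)" and iso: "h \<in> iso Q (img Q h)" using img_group[OF G inj] by auto
  have hom: "group_hom Q (img Q h) h"
    using G H iso by (simp add: group_hom_def group_hom_axioms_def iso_def)
  have c: "carrier (img Q h) = h ` carrier Q" by (simp add: img_def)
  have AB: "A \<in> carrier Q" "B \<in> carrier Q" using g by (auto simp: good_def)
  have gen: "generate (img Q h) {h A, h B} = carrier (img Q h)"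
  proof -
    have "generate (img Q h) (h ` {A, B}) = h ` generate Q {A, B}"
      using group_hom.generate_img[OF hom, of "{A, B}"] AB by simp
    then show ?thesis using g c by (simp add: good_def)
  qed
  have met: "metabelian (img Q h)"
  proof -
    have d: "derived (img Q h) (carrier (img Q h)) = h ` derived Q (carrier Q)"
      using group_hom.derived_img[OF hom, of "carrier Q"] c by simp
    have dc: "derived Q (carrier Q) \<subseteq> carrier Q" using group.derived_in_carrier[OF G] by simp
    show ?thesis unfolding metabelian_def d
    proof (intro ballI)
      fix x y assume "x \<in> h ` derived Q (carrier Q)" "y \<in> h ` derived Q (carrier Q)"
      then obtain a b where ab: "a \<in> derived Q (carrier Q)" "b \<in> derived Q (carrier Q)" "x = h a" "y = h b" by auto
      have "a \<otimes>\<^bsub>Q\<^esub> b = b \<otimes>\<^bsub>Q\<^esub> a" using g ab unfolding good_def metabelian_def by blast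
      then show "x \<otimes>\<^bsub>img Q h\<^esub> y = y \<otimes>\<^bsub>img Q h\<^esub> x"
        using ab dc group_hom.hom_mult[OF hom] by (metis subsetD)
    qed
  qed
  have ex: "\<forall>g \<in> carrier (img Q h). g [^]\<^bsub>img Q h\<^esub> n = \<one>\<^bsub>img Q h\<^esub>"
  proof
    fix x assume "x \<in> carrier (img Q h)"
    then obtain a where a: "a \<in> carrier Q" "x = h a" using c by auto
    then show "x [^]\<^bsub>img Q h\<^esub> n = \<one>\<^bsub>img Q h\<^esub>"
      using g group_hom.hom_nat_pow[OF hom a(1), of n] group_hom.hom_one[OF hom]
      unfolding good_def by auto
  qed
  have ordt: "group.ord (img Q h) (h x) = group.ord Q x" if x: "x \<in> carrier Q" for x
  proof -
    have "h x [^]\<^bsub>img Q h\<^esub> k = \<one>\<^bsub>img Q h\<^esub> \<longleftrightarrow> group.ord Q x dvd k" for k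
    proof -
      have "h x [^]\<^bsub>img Q h\<^esub> k = \<one>\<^bsub>img Q h\<^esub> \<longleftrightarrow> h (x [^]\<^bsub>Q\<^esub> k) = h \<one>\<^bsub>Q\<^esub>"
        using group_hom.hom_nat_pow[OF hom x, of k] group_hom.hom_one[OF hom] by simp
      also have "\<dots> \<longleftrightarrow> x [^]\<^bsub>Q\<^esub> k = \<one>\<^bsub>Q\<^esub>"
      proof -
        have "x [^]\<^bsub>Q\<^esub> k \<in> carrier Q" "\<one>\<^bsub>Q\<^esub> \<in> carrier Q"
          using x G by (auto simp: group.is_monoid monoid.nat_pow_closed monoid.one_closed)
        then show ?thesis by (simp add: inj_on_eq_iff[OF inj])
      qed
      also have "\<dots> \<longleftrightarrow> group.ord Q x dvd k" using group.pow_eq_id[OF G x] .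
      finally show ?thesis .
    qed
    then show ?thesis using group.ord_unique[OF H] x group_hom.hom_closed[OF hom x] by blast
  qed
  have comm: "commutator (img Q h) (h A) (h B) = h (commutator Q A B)"
    using AB G unfolding commutator_def
    by (simp add: group_hom.hom_mult[OF hom] group_hom.hom_inv[OF hom] group.inv_closed monoid.m_closed group.is_monoid)
  have commc: "commutator Q A B \<in> carrier Q"
    using AB G unfolding commutator_def by (simp add: group.inv_closed monoid.m_closed group.is_monoid)
  show ?thesis
    unfolding good_def
    using H gen met ex ordt[OF AB(1)] ordt[OF commc] comm g c AB
    by (auto simp: good_def)
qed



context wr2 begin

abbreviation "Q0 \<equiv> G\<lparr>carrier := C\<rparr>"

lemma good_Q0: "good Q0 eA eB n"
proof -
  have grp: "group Q0" using subgroup.subgroup_is_group[OF C_subgroup group_G] .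
  have fin: "finite (carrier Q0)"
  proof -
    have "finite (carrier G)" by (simp add: carrier_G finite_PiE)
    then show ?thesis using C_sub by (simp add: finite_subset)
  qed
  have inC: "eA \<in> C" "eB \<in> C" by (auto intro: generate.incl)
  have gen: "generate Q0 {eA, eB} = carrier Q0"
    using group.generate_consistent[OF group_G, of "{eA, eB}" C] inC C_subgroup by simp
  have met: "metabelian Q0"
    unfolding metabelian_def
  proof (intro ballI)
    fix x y assume "x \<in> derived Q0 (carrier Q0)" "y \<in> derived Q0 (carrier Q0)"
    then have "x \<in> derived G C" "y \<in> derived G C"
      using group.derived_consistent[OF group_G, of C C] C_subgroup by auto
    then show "x \<otimes>\<^bsub>Q0\<^esub> y = y \<otimes>\<^bsub>Q0\<^esub> x" using derived_fst fst0_comm by simp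
  qed
  have ex: "\<forall>g \<in> carrier Q0. g [^]\<^bsub>Q0\<^esub> n = \<one>\<^bsub>Q0\<^esub>"
    using C_exp monoid.nat_pow_consistent[OF G_monoid] by simp
  have ordQ: "group.ord Q0 x = group.ord G x" if x: "x \<in> C" for x
  proof -
    have xc: "x \<in> carrier G" using x C_sub by auto
    have "x [^]\<^bsub>Q0\<^esub> k = \<one>\<^bsub>Q0\<^esub> \<longleftrightarrow> group.ord G x dvd k" for k
      using group.pow_eq_id[OF group_G xc, of k] monoid.nat_pow_consistent[OF G_monoid, of x k C] by simp
    then show ?thesis using group.ord_unique[OF grp] x by simp
  qed
  have comm: "commutator Q0 eA eB = cAB"
    unfolding cAB_def commutator_def using inC group.m_inv_consistent[OF group_G C_subgroup] by simp
  have cC: "cAB \<in> C"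
    unfolding cAB_def commutator_def using inC C_subgroup
    by (simp add: subgroup.m_closed subgroup.m_inv_closed)
  show ?thesis unfolding good_def
    using grp fin inC gen met ex ordQ[OF inC(1)] ordQ[OF cC] comm ord_eA ord_cAB by simp
qed

definition "hcode x = to_nat (fst x, map (snd x) [0..<L])"

lemma hcode_inj: "inj_on hcode (carrier Q0)"
proof (rule inj_onI)
  fix x y assume x: "x \<in> carrier Q0" and y: "y \<in> carrier Q0" and e: "hcode x = hcode y"
  have xc: "x \<in> carrier G" and yc: "y \<in> carrier G" using x y C_sub by auto
  have 1: "fst x = fst y" and 2: "map (snd x) [0..<L] = map (snd y) [0..<L]" using e by (auto simp: hcode_def)
  have "snd x = snd y"
  proof
    fix i show "snd x i = snd y i"
    proof (cases "i < L")
      case True then show ?thesis using 2 by (metis atLeastLessThan_iff le0 map_eq_conv set_upt)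
    next
      case False then show ?thesis using xc yc by (auto simp: mem_carrier PiE_iff extensional_def)
    qed
  qed
  then show "x = y" using 1 by (simp add: prod_eq_iff)
qed

end

lemma hyp4: "int 4 dvd (\<Sum>j<4. dd ((i + j * s) mod 4))"
proof -
  have r: "(i + j * s) mod 4 = (i mod 4 + j * (s mod 4)) mod 4" for j :: nat
  proof -
    have m: "(j * (s mod 4)) mod 4 = (j * s) mod 4" by (simp add: mod_mult_right_eq)
    have "(i mod 4 + j * (s mod 4)) mod 4 = (i + j * (s mod 4)) mod 4" by (rule mod_add_left_eq)
    also have "\<dots> = (i + (j * (s mod 4)) mod 4) mod 4" by (rule mod_add_right_eq[symmetric])
    also have "\<dots> = (i + (j * s) mod 4) mod 4" by (simp only: m)
    also have "\<dots> = (i + j * s) mod 4" by (rule mod_add_right_eq)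
    finally show ?thesis by (rule sym)
  qed
  have a: "i mod 4 \<in> {0,1,2,3}" "s mod 4 \<in> {0,1,2,3}" by auto
  have H: "int 4 dvd (\<Sum>j<4. dd ((a + j * b) mod 4))" if "a \<in> {0,1,2,3}" "b \<in> {0,1,2,3}" for a b :: nat
  proof -
    have L4: "{..<4::nat} = {0,1,2,3}" by auto
    show ?thesis using that by (elim insertE emptyE; simp add: L4 dd_def)
  qed
  show ?thesis unfolding r by (rule H[OF a(1) a(2)])
qed

lemma hyp_prime:
  assumes p: "Factorial_Ring.prime p" "2 < p"
  shows "int p dvd (\<Sum>j<p. dd ((i + j * s) mod p))"
proof (cases "p dvd s")
  case True
  then obtain c where c: "s = c * p" by (metis dvd_def mult.commute)
  have "(i + j * s) mod p = i mod p" for j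
  proof -
    have "(i + j * s) mod p = (i + (j * c) * p) mod p" by (simp add: c mult.assoc)
    then show ?thesis by simp
  qed
  then show ?thesis by simp
next
  case False
  let ?f = "\<lambda>j. (i + j * s) mod p"
  have key: "a = b" if ab: "a < p" "b < p" "a \<le> b" "?f a = ?f b" for a b
  proof -
    have "p dvd (i + b * s) - (i + a * s)"
      using mod_eq_dvd_iff_nat[of "i + a * s" "i + b * s" p] ab by (simp add: mult_le_mono1)
    moreover have "(i + b * s) - (i + a * s) = (b - a) * s" by (simp add: diff_mult_distrib)
    ultimately have "p dvd (b - a) * s" by simp
    then have pd: "p dvd (b - a)" using False p(1) by (simp add: prime_dvd_mult_iff)
    have lt: "b - a < p" using ab by simp
    have "b - a = 0"
    proof (rule ccontr)
      assume "b - a \<noteq> 0"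
      then have "p \<le> b - a" using pd by (simp add: dvd_imp_le)
      then show False using lt by simp
    qed
    then show ?thesis using ab by simp
  qed
  have inj: "inj_on ?f {..<p}"
  proof (rule inj_onI)
    fix a b assume "a \<in> {..<p}" "b \<in> {..<p}" "?f a = ?f b"
    then show "a = b" using key[of a b] key[of b a] by (cases "a \<le> b") auto
  qed
  have sub: "?f ` {..<p} \<subseteq> {..<p}" using p by (auto simp: prime_gt_0_nat)
  have img: "?f ` {..<p} = {..<p}" using endo_inj_surj[OF _ sub inj] by simp
  have "(\<Sum>j<p. dd ((i + j * s) mod p)) = (\<Sum>k<p. dd k)"
    using sum.reindex[OF inj, of dd] img by simp
  also have "\<dots> = (\<Sum>k<p. (if k = 0 then 1 else 0) - (if k = 2 then 1 else 0))"
    by (intro sum.cong) (auto simp: dd_def)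
  also have "\<dots> = 0" using p by (simp add: sum_subtractf prime_gt_0_nat)
  finally show ?thesis by simp
qed

lemma choose_L:
  assumes "2 < (n::nat)"
  shows "\<exists>L. L dvd n \<and> 2 < L \<and> (\<forall>i s. int L dvd (\<Sum>j<L. dd ((i + j * s) mod L)))"
proof (cases "4 dvd n")
  case True
  then show ?thesis using hyp4 by (intro exI[of _ 4]) auto
next
  case False
  obtain m where m: "m dvd n" "odd m" "m \<noteq> 1"
  proof (cases "odd n")
    case True then show ?thesis using that[of n] assms by auto
  next
    case False
    then obtain k where k: "n = 2 * k" by blast
    have "odd k" using \<open>\<not> 4 dvd n\<close> k by auto
    moreover have "k \<noteq> 1" using assms k by auto
    ultimately show ?thesis using that[of k] k by simp
  qed
  then obtain p where p: "Factorial_Ring.prime p" "p dvd m" using prime_factor_nat by blast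
  have "odd p" using p(2) m(2) dvd_trans by blast
  then have "p \<noteq> 2" by auto
  then have p2: "2 < p" using prime_ge_2_nat[OF p(1)] by linarith
  show ?thesis using hyp_prime[OF p(1) p2] dvd_trans[OF p(2) m(1)] p2 by blast
qed

theorem proposition2p1:
  fixes n :: nat
  assumes "n > 2"
  shows "\<exists>(Q :: nat monoid) A B.
           group Q \<and> finite (carrier Q) \<and>
           A \<in> carrier Q \<and> B \<in> carrier Q \<and>
           generate Q {A, B} = carrier Q \<and>
           metabelian Q \<and>
           (\<forall>g \<in> carrier Q. g [^]\<^bsub>Q\<^esub> n = \<one>\<^bsub>Q\<^esub>) \<and>
           group.ord Q A = n \<and>
           group.ord Q (commutator Q A B) = n"
proof -
  obtain L where L: "L dvd n" "2 < L" "\<forall>i s. int L dvd (\<Sum>j<L. dd ((i + j * s) mod L))"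
    using choose_L[OF assms] by blast
  have "wr2 n L" unfolding wr2_def wr_def wr2_axioms_def using L assms by auto
  then interpret wr2 n L .
  have "good (img Q0 hcode) (hcode eA) (hcode eB) n"
    by (rule good_transport[OF good_Q0 hcode_inj])
  then have g: "group (img Q0 hcode) \<and> finite (carrier (img Q0 hcode)) \<and>
           hcode eA \<in> carrier (img Q0 hcode) \<and> hcode eB \<in> carrier (img Q0 hcode) \<and>
           generate (img Q0 hcode) {hcode eA, hcode eB} = carrier (img Q0 hcode) \<and>
           metabelian (img Q0 hcode) \<and>
           (\<forall>g \<in> carrier (img Q0 hcode). g [^]\<^bsub>img Q0 hcode\<^esub> n = \<one>\<^bsub>img Q0 hcode\<^esub>) \<and>
           group.ord (img Q0 hcode) (hcode eA) = n \<and>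
           group.ord (img Q0 hcode) (commutator (img Q0 hcode) (hcode eA) (hcode eB)) = n"
    unfolding good_def .
  show ?thesis by (rule exI, rule exI, rule exI, rule g)
qed


end
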